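(* Let $q$ be a prime power, $n\ge 3$, and let $\Phi_1$ be the set of lines of $\mathrm{AG}(n,q)$. Let $V_0,V_1,V_2,V_3$ be the common eigenspaces of the association scheme on $\Phi_1$ described in the context. Then the characteristic vectors of the point-pencils of $\mathrm{AG}(n,q)$ form a basis of $V_0\perp V_1$.
   Context: $\mathrm{AG}(n,q)$ is $\mathrm{PG}(n,q)$ with a hyperplane $\pi_\infty$ removed; affine lines are projective lines not contained in $\pi_\infty$. Define relations on $\Phi_1$: $(\ell,\ell')\in R_0$ if $\ell=\ell'$; $\in R_1$ if they meet in an affine point; $\in R_2$ if they are distinct and meet in a point of $\pi_\infty$; $\in R_3$ if they are disjoint in $\mathrm{PG}(n,q)$. Let $B_1,B_2,B_3$ be the corresponding adjacency matrices (real $|\Phi_1|\times|\Phi_1|$). These commute and $\mathbb{R}^{\Phi_1}$ is the orthogonal direct sum of four common eigenspaces $V_0,V_1,V_2,V_3$, on which $(B_1,B_2,B_3)$ act as the scalars: on $V_0$ (spanned by the all-ones vector) $\left(\frac{q^{n+1}-q^2}{q-1},\,q^{n-1}-1,\,\frac{q^2-(q+1)q^n+q^{2n-1}}{q-1}\right)$; on $V_1$ $\left(\frac{q^n-q^2}{q-1},\,-1,\,\frac{q^2-q^n}{q-1}\right)$; on $V_2$ $(-q,-1,q)$; on $V_3$ $(-q,\,q^{n-1}-1,\,q-q^{n-1})$. A point-pencil is the set of all affine lines through a fixed affine point. *)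

theory Defs
  imports "HOL-Analysis.Analysis"
begin

text \<open>AG(n,q): points are vectors in k^n over a finite field k with q = CARD(k),
  n = CARD('n). Affine lines are the sets p + k v with v nonzero.\<close>

definition affine_lines :: "(('k::field)^'n) set set" where
  "affine_lines = {{p + t *s v | t. True} | p v. v \<noteq> 0}"

text \<open>Direction (difference set) of a line; two affine lines meet in the same
  point at infinity iff their directions coincide.\<close>
definition line_dir :: "(('k::field)^'n) set \<Rightarrow> ('k^'n) set" where
  "line_dir l = {x - y | x y. x \<in> l \<and> y \<in> l}"

definition rel1 :: "(('k::field)^'n) set \<Rightarrow> ('k^'n) set \<Rightarrow> bool" where
  "rel1 l l' \<longleftrightarrow> l \<noteq> l' \<and> l \<inter> l' \<noteq> {}"

definition rel2 :: "(('k::field)^'n) set \<Rightarrow> ('k^'n) set \<Rightarrow> bool" where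
  "rel2 l l' \<longleftrightarrow> l \<noteq> l' \<and> line_dir l = line_dir l'"

definition rel3 :: "(('k::field)^'n) set \<Rightarrow> ('k^'n) set \<Rightarrow> bool" where
  "rel3 l l' \<longleftrightarrow> l \<inter> l' = {} \<and> line_dir l \<noteq> line_dir l'"

text \<open>Vectors of R^Phi1 are represented as real functions on sets of points
  vanishing outside the set of affine lines.\<close>
definition line_space :: "((('k::field)^'n) set \<Rightarrow> real) set" where
  "line_space = {f. \<forall>l. l \<notin> (affine_lines :: ('k^'n) set set) \<longrightarrow> f l = 0}"

definition adj_op ::
  "((('k::field)^'n) set \<Rightarrow> ('k^'n) set \<Rightarrow> bool) \<Rightarrow> (('k^'n) set \<Rightarrow> real) \<Rightarrow> ('k^'n) set \<Rightarrow> real" where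
  "adj_op R f l = (if l \<in> affine_lines then (\<Sum>l'\<in>{l'\<in>affine_lines. R l l'}. f l') else 0)"

definition common_eigenspace :: "real \<Rightarrow> real \<Rightarrow> real \<Rightarrow> ((('k::field)^'n) set \<Rightarrow> real) set" where
  "common_eigenspace a b c = {f \<in> line_space.
      adj_op rel1 f = (\<lambda>l. a * f l) \<and> adj_op rel2 f = (\<lambda>l. b * f l) \<and> adj_op rel3 f = (\<lambda>l. c * f l)}"

definition V0 :: "((('k::{field,finite})^'n) set \<Rightarrow> real) set" where
  "V0 = (let q = real CARD('k); n = CARD('n) in
     common_eigenspace ((q^(n+1) - q^2)/(q-1)) (q^(n-1) - 1)
        ((q^2 - (q+1)*q^n + q^(2*n-1))/(q-1)))"

definition V1 :: "((('k::{field,finite})^'n) set \<Rightarrow> real) set" where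
  "V1 = (let q = real CARD('k); n = CARD('n) in
     common_eigenspace ((q^n - q^2)/(q-1)) (-1) ((q^2 - q^n)/(q-1)))"

definition V2 :: "((('k::{field,finite})^'n) set \<Rightarrow> real) set" where
  "V2 = (let q = real CARD('k) in common_eigenspace (-q) (-1) q)"

definition V3 :: "((('k::{field,finite})^'n) set \<Rightarrow> real) set" where
  "V3 = (let q = real CARD('k); n = CARD('n) in
     common_eigenspace (-q) (q^(n-1) - 1) (q - q^(n-1)))"

definition pencil_vec :: "('k::field)^'n \<Rightarrow> ('k^'n) set \<Rightarrow> real" where
  "pencil_vec p l = (if l \<in> affine_lines \<and> p \<in> l then 1 else 0)"

end

theory Submission
  imports Defs
begin


definition line :: "('k::field)^'n \<Rightarrow> 'k^'n \<Rightarrow> ('k^'n) set" where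
  "line p v = {p + t *s v | t. True}"

lemma affine_lines_eq: "affine_lines = {line p v | p v. v \<noteq> 0}"
  unfolding affine_lines_def line_def by simp

lemma mem_line: "x \<in> line p v \<longleftrightarrow> (\<exists>t. x = p + t *s v)"
  unfolding line_def by auto

lemma line_in: "v \<noteq> 0 \<Longrightarrow> line p v \<in> affine_lines"
  unfolding affine_lines_eq by auto

lemma base_in: "p \<in> line p v"
  unfolding mem_line by (rule exI[of _ 0]) simp

lemma line_scale: "(c::'k::field) \<noteq> 0 \<Longrightarrow> line p (c *s v) = line p v"
proof (rule set_eqI, unfold mem_line, rule iffI)
  fix x assume c: "c \<noteq> 0"
  { assume "\<exists>t. x = p + t *s (c *s v)"
    then obtain t where "x = p + t *s (c *s v)" by blast
    then show "\<exists>t. x = p + t *s v" by (intro exI[of _ "t*c"]) (simp add: vec_eq_iff) }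
  { assume "\<exists>t. x = p + t *s v"
    then obtain t where "x = p + t *s v" by blast
    then show "\<exists>t. x = p + t *s (c *s v)" using c by (intro exI[of _ "t/c"]) (simp add: vec_eq_iff) }
qed

lemma line_rebase: "x \<in> line p v \<Longrightarrow> line x v = line p v"
proof -
  assume "x \<in> line p v"
  then obtain s where s: "x = p + s *s v" by (auto simp: mem_line)
  show ?thesis
  proof (rule set_eqI, unfold mem_line, rule iffI)
    fix y
    { assume "\<exists>t. y = x + t *s v"
      then obtain t where "y = x + t *s v" by blast
      then show "\<exists>t. y = p + t *s v" by (intro exI[of _ "s+t"]) (simp add: s vec_eq_iff algebra_simps) }
    { assume "\<exists>t. y = p + t *s v"
      then obtain t where "y = p + t *s v" by blast
      then show "\<exists>t. y = x + t *s v" by (intro exI[of _ "t-s"]) (simp add: s vec_eq_iff algebra_simps) }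
  qed
qed

lemma two_pts_line: assumes "v \<noteq> 0" "x \<in> line p v" "y \<in> line p v" "x \<noteq> y"
  shows "line p v = line x (y - x)"
proof -
  obtain s where s: "x = p + s *s v" using assms by (auto simp: mem_line)
  obtain t where t: "y = p + t *s v" using assms by (auto simp: mem_line)
  have "y - x = (t - s) *s v" by (simp add: s t vec_eq_iff algebra_simps)
  moreover have "t - s \<noteq> 0" using assms s t by auto
  ultimately have "line x (y - x) = line x v" by (metis line_scale)
  also have "\<dots> = line p v" using assms(2) by (rule line_rebase)
  finally show ?thesis by simp
qed

lemma in_lines_E: assumes "l \<in> affine_lines" obtains p v where "v \<noteq> 0" "l = line p v"
  using assms unfolding affine_lines_eq by auto

lemma unique_line: assumes "l \<in> affine_lines" "x \<in> l" "y \<in> l" "x \<noteq> y"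
  shows "l = line x (y - x)"
proof -
  obtain p v where "v \<noteq> 0" "l = line p v" using assms(1) by (rule in_lines_E)
  then show ?thesis using assms two_pts_line by blast
qed

lemma line_through_two: "x \<in> line x (y - x)" "y \<in> line x (y - x)"
  unfolding mem_line by (rule exI[of _ 0], simp) (rule exI[of _ 1], simp)

lemma lines_two_pts: assumes "x \<noteq> y"
  shows "{l \<in> affine_lines. x \<in> l \<and> y \<in> l} = {line x (y - x)}"
proof (rule set_eqI, rule iffI)
  fix l assume "l \<in> {l \<in> affine_lines. x \<in> l \<and> y \<in> l}"
  then show "l \<in> {line x (y - x)}" using unique_line[of l x y] assms by simp
next
  fix l assume "l \<in> {line x (y - x)}"
  then show "l \<in> {l \<in> affine_lines. x \<in> l \<and> y \<in> l}"
    using line_through_two[where x=x and y=y] line_in[of "y - x" x] assms by simp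
qed

lemma card_line: fixes v :: "('k::{field,finite})^'n" assumes "v \<noteq> 0" shows "card (line p v) = CARD('k::{field,finite})"
proof -
  have "line p v = (\<lambda>t::'k. p + t *s v) ` UNIV" unfolding line_def by auto
  moreover have "inj (\<lambda>t::'k. p + t *s v)" using assms by (auto simp: inj_def)
  ultimately show ?thesis by (simp add: card_image)
qed

lemma card_aline: "l \<in> affine_lines \<Longrightarrow> card l = CARD('k::{field,finite})"
  for l :: "(('k::{field,finite})^'n) set"
  by (erule in_lines_E) (simp add: card_line)

lemma line_dir_line: "line_dir (line p v) = {t *s v | t. True}"
proof (rule set_eqI, rule iffI)
  fix z assume "z \<in> line_dir (line p v)"
  then obtain s t where "z = (p + s *s v) - (p + t *s v)" unfolding line_dir_def mem_line by blast
  then show "z \<in> {t *s v | t. True}" by (intro CollectI exI[of _ "s - t"]) (simp add: vec_eq_iff algebra_simps)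
next
  fix z assume "z \<in> {t *s v | t. True}"
  then obtain t where "z = t *s v" by blast
  moreover have "p + t *s v \<in> line p v" "p \<in> line p v" unfolding mem_line by auto
  ultimately show "z \<in> line_dir (line p v)" unfolding line_dir_def by force
qed

lemma same_dir_meet: assumes "l \<in> affine_lines" "l' \<in> affine_lines" "line_dir l = line_dir l'"
  "x \<in> l" "x \<in> l'" shows "l = l'"
proof -
  obtain a v where v: "v \<noteq> 0" "l = line a v" using assms(1) by (rule in_lines_E)
  obtain b w where w: "w \<noteq> 0" "l' = line b w" using assms(2) by (rule in_lines_E)
  have "w \<in> line_dir l'" unfolding w line_dir_line by (intro CollectI exI[of _ 1]) simp
  then obtain c where c: "w = c *s v" using assms(3) v by (auto simp: line_dir_line)
  with w have c0: "c \<noteq> 0" by auto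
  have "l' = line x w" using w assms(5) line_rebase by metis
  also have "\<dots> = line x v" using c c0 line_scale by simp
  also have "\<dots> = l" using v assms(4) line_rebase by simp
  finally show ?thesis by simp
qed


lemma finite_any: "finite (A :: ('k::finite^'n) set set)" by simp

lemma swap_count:
  fixes A :: "(('k::finite)^'n) set set" and c :: "'k^'n \<Rightarrow> real"
  shows "(\<Sum>l\<in>A. \<Sum>x\<in>l. c x) = (\<Sum>x\<in>UNIV. c x * real (card {l\<in>A. x \<in> l}))"
proof -
  have "(\<Sum>l\<in>A. \<Sum>x\<in>l. c x) = (\<Sum>l\<in>A. \<Sum>x\<in>UNIV. if x \<in> l then c x else 0)"
    by (rule sum.cong[OF refl]) (simp add: sum.If_cases)
  also have "\<dots> = (\<Sum>x\<in>UNIV. \<Sum>l\<in>A. if x \<in> l then c x else 0)" by (rule sum.swap)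
  also have "\<dots> = (\<Sum>x\<in>UNIV. c x * real (card {l\<in>A. x \<in> l}))"
    by (rule sum.cong[OF refl]) (simp add: sum.inter_filter[symmetric])
  finally show ?thesis .
qed

lemma sum_split_line:
  fixes c :: "('k::finite)^'n \<Rightarrow> real"
  shows "(\<Sum>x\<in>UNIV. c x * (if x \<in> l then a else b))
     = a * (\<Sum>x\<in>l. c x) + b * ((\<Sum>x\<in>UNIV. c x) - (\<Sum>x\<in>l. c x))"
proof -
  have "(\<Sum>x\<in>UNIV. c x) = (\<Sum>x\<in>l. c x) + (\<Sum>x\<in>UNIV - l. c x)"
    by (simp add: sum.subset_diff[of l UNIV])
  moreover have "(\<Sum>x\<in>UNIV. c x * (if x \<in> l then a else b))
      = (\<Sum>x\<in>l. a * c x) + (\<Sum>x\<in>UNIV - l. b * c x)"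
    by (simp add: if_distrib sum.If_cases Compl_eq_Diff_UNIV mult.commute)
  ultimately show ?thesis by (simp add: sum_distrib_left)
qed



lemma card_pair_lines:
  fixes p x :: "('k::{field,finite})^'n"
  shows "card {l \<in> {l \<in> affine_lines. p \<in> l}. x \<in> l} = (if x = p then card {l \<in> affine_lines. p \<in> l} else 1)"
proof (cases "x = p")
  case True then show ?thesis by simp
next
  case False
  have "{l \<in> {l \<in> affine_lines. p \<in> l}. x \<in> l} = {l \<in> affine_lines. p \<in> l \<and> x \<in> l}" by auto
  also have "\<dots> = {line p (x - p)}" using False lines_two_pts[of p x] by auto
  finally show ?thesis using False by simp
qed

lemma pencil_sum:
  fixes p :: "('k::{field,finite})^'n" and c :: "'k^'n \<Rightarrow> real"
  shows "(\<Sum>l\<in>{l \<in> affine_lines. p \<in> l}. \<Sum>x\<in>l. c x)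
     = (real (card {l \<in> affine_lines. p \<in> l}) - 1) * c p + (\<Sum>x\<in>UNIV. c x)"
proof -
  have "(\<Sum>l\<in>{l \<in> affine_lines. p \<in> l}. \<Sum>x\<in>l. c x)
     = (\<Sum>x\<in>UNIV. c x * (if x = p then real (card {l \<in> affine_lines. p \<in> l}) else 1))"
    unfolding swap_count card_pair_lines by (rule sum.cong) auto
  also have "\<dots> = c p * real (card {l \<in> affine_lines. p \<in> l}) + (\<Sum>x\<in>UNIV - {p}. c x)"
    by (subst sum.remove[of UNIV p]) (auto intro!: sum.cong)
  also have "(\<Sum>x\<in>UNIV - {p}. c x) = (\<Sum>x\<in>UNIV. c x) - c p"
    by (simp add: sum_diff1)
  finally show ?thesis by (simp add: algebra_simps)
qed

lemma card_UNIV_pts: "real CARD(('k::{field,finite})^'n) = real CARD('k) ^ CARD('n)" by simp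

lemma lines_through_count:
  fixes p :: "('k::{field,finite})^'n"
  shows "(real CARD('k) - 1) * real (card {l \<in> affine_lines. p \<in> l}) = real CARD('k) ^ CARD('n) - 1"
proof -
  define c :: "'k^'n \<Rightarrow> real" where "c x = (if x = p then 0 else 1)" for x
  have "(\<Sum>l\<in>{l \<in> affine_lines. p \<in> l}. \<Sum>x\<in>l. c x)
     = (\<Sum>l\<in>{l \<in> affine_lines. p \<in> l}. real CARD('k) - 1)"
  proof (rule sum.cong[OF refl])
    fix l assume l: "l \<in> {l \<in> affine_lines. p \<in> l}"
    then have "(\<Sum>x\<in>l. c x) = c p + (\<Sum>x\<in>l - {p}. c x)" by (simp add: sum.remove)
    also have "\<dots> = real (card (l - {p}))" by (simp add: c_def)
    also have "\<dots> = real CARD('k) - 1" using l card_aline[of l] by (simp add: of_nat_diff)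
    finally show "(\<Sum>x\<in>l. c x) = real CARD('k) - 1" .
  qed
  also have "\<dots> = (real CARD('k) - 1) * real (card {l \<in> affine_lines. p \<in> l})" by simp
  finally have "(real CARD('k) - 1) * real (card {l \<in> affine_lines. p \<in> l})
     = (real (card {l \<in> affine_lines. p \<in> l}) - 1) * c p + (\<Sum>x\<in>UNIV. c x)"
    using pencil_sum[where p=p and c=c] by simp
  also have "\<dots> = (\<Sum>x\<in>UNIV. c x)" by (simp add: c_def)
  also have "\<dots> = real (card (UNIV - {p}))" by (simp add: c_def sum.If_cases Compl_eq_Diff_UNIV)
  also have "\<dots> = real CARD('k) ^ CARD('n) - 1" by (simp add: card_Diff_singleton of_nat_diff)
  finally show ?thesis .
qed


abbreviation "thru (x::('k::{field,finite})^'n) \<equiv> {l \<in> affine_lines. x \<in> l}"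

lemma nested_eq: "{l' \<in> {l' \<in> A. R l l'}. x \<in> l'} = {l' \<in> A. x \<in> l' \<and> R l l'}" by auto

lemma cnt1_in: assumes "l \<in> affine_lines" "x \<in> l"
  shows "{l' \<in> affine_lines. x \<in> l' \<and> rel1 l l'} = thru x - {l}"
  using assms unfolding rel1_def by auto

lemma cnt2_in: assumes "l \<in> affine_lines" "x \<in> l"
  shows "{l' \<in> affine_lines. x \<in> l' \<and> rel2 l l'} = {}"
  using assms same_dir_meet unfolding rel2_def by blast

lemma cnt3_in: assumes "x \<in> l"
  shows "{l' \<in> affine_lines. x \<in> l' \<and> rel3 l l'} = {}"
  using assms unfolding rel3_def by blast

lemma cnt1_out: fixes l :: "(('k::{field,finite})^'n) set" assumes "l \<in> affine_lines" "x \<notin> l"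
  shows "card {l' \<in> affine_lines. x \<in> l' \<and> rel1 l l'} = CARD('k::{field,finite})"
proof -
  have eq: "{l' \<in> affine_lines. x \<in> l' \<and> rel1 l l'} = (\<lambda>y. line x (y - x)) ` l"
  proof (rule set_eqI, rule iffI)
    fix l' assume "l' \<in> {l' \<in> affine_lines. x \<in> l' \<and> rel1 l l'}"
    then have l': "l' \<in> affine_lines" "x \<in> l'" "l \<inter> l' \<noteq> {}" unfolding rel1_def by auto
    then obtain y where y: "y \<in> l" "y \<in> l'" by blast
    with assms have "y \<noteq> x" by auto
    then have "l' = line x (y - x)" using unique_line[of l' x y] l' y by simp
    then show "l' \<in> (\<lambda>y. line x (y - x)) ` l" using y by blast
  next
    fix l' assume "l' \<in> (\<lambda>y. line x (y - x)) ` l"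
    then obtain y where y: "y \<in> l" "l' = line x (y - x)" by blast
    with assms have yx: "y \<noteq> x" by auto
    have "x \<in> l'" "y \<in> l'" using line_through_two[where x=x and y=y] y by auto
    moreover have "l' \<in> affine_lines" using y yx line_in[of "y - x" x] by simp
    moreover have "l \<noteq> l'" using assms \<open>x \<in> l'\<close> by auto
    ultimately show "l' \<in> {l' \<in> affine_lines. x \<in> l' \<and> rel1 l l'}"
      using y unfolding rel1_def by auto
  qed
  have "inj_on (\<lambda>y. line x (y - x)) l"
  proof (rule inj_onI, rule ccontr)
    fix y1 y2 assume y: "y1 \<in> l" "y2 \<in> l" "line x (y1 - x) = line x (y2 - x)" "y1 \<noteq> y2"
    let ?m = "line x (y1 - x)"
    have "y1 \<noteq> x" "y2 \<noteq> x" using y assms by auto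
    then have m: "?m \<in> affine_lines" "x \<in> ?m" "y1 \<in> ?m" "y2 \<in> ?m"
      using line_in[of "y1 - x" x] line_through_two[where x=x and y=y1] line_through_two[where x=x and y=y2] y(3)
      by auto
    have "l = line y1 (y2 - y1)" using unique_line[of l y1 y2] assms y by simp
    moreover have "?m = line y1 (y2 - y1)" using unique_line[of ?m y1 y2] m y by simp
    ultimately show False using m assms by simp
  qed
  then show ?thesis using eq card_aline[OF assms(1)] by (simp add: card_image)
qed

lemma cnt2_out: fixes l :: "(('k::{field,finite})^'n) set" assumes "l \<in> affine_lines" "x \<notin> l"
  shows "card {l' \<in> affine_lines. x \<in> l' \<and> rel2 l l'} = 1"
proof -
  obtain a v where v: "v \<noteq> 0" "l = line a v" using assms(1) by (rule in_lines_E)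
  have "{l' \<in> affine_lines. x \<in> l' \<and> rel2 l l'} = {line x v}"
  proof (rule set_eqI, rule iffI)
    fix l' assume "l' \<in> {l' \<in> affine_lines. x \<in> l' \<and> rel2 l l'}"
    then have l': "l' \<in> affine_lines" "x \<in> l'" "line_dir l' = line_dir (line x v)"
      unfolding rel2_def v line_dir_line by auto
    then show "l' \<in> {line x v}" using same_dir_meet[OF l'(1) line_in[OF v(1)] l'(3) l'(2) base_in] by simp
  next
    fix l' assume "l' \<in> {line x v}"
    then have "l' = line x v" by simp
    moreover have "line x v \<noteq> l" using assms base_in[of x v] by auto
    moreover have "line_dir (line x v) = line_dir l" unfolding v line_dir_line by simp
    ultimately show "l' \<in> {l' \<in> affine_lines. x \<in> l' \<and> rel2 l l'}"
      using line_in[OF v(1)] base_in[of x v] unfolding rel2_def by auto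
  qed
  then show ?thesis by simp
qed

lemma cnt3_out: fixes l :: "(('k::{field,finite})^'n) set" assumes "l \<in> affine_lines" "x \<notin> l"
  shows "real (card {l' \<in> affine_lines. x \<in> l' \<and> rel3 l l'})
    = real (card (thru x)) - real CARD('k::{field,finite}) - 1"
proof -
  let ?S1 = "{l' \<in> affine_lines. x \<in> l' \<and> rel1 l l'}"
  let ?S2 = "{l' \<in> affine_lines. x \<in> l' \<and> rel2 l l'}"
  have eq: "{l' \<in> affine_lines. x \<in> l' \<and> rel3 l l'} = thru x - (?S1 \<union> ?S2)"
    using assms unfolding rel1_def rel2_def rel3_def by auto
  have disj: "?S1 \<inter> ?S2 = {}"
    using same_dir_meet assms(1) unfolding rel1_def rel2_def by blast
  have sub: "?S1 \<union> ?S2 \<subseteq> thru x" by auto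
  have cu: "card (?S1 \<union> ?S2) = CARD('k) + 1"
    using card_Un_disjoint[OF _ _ disj] cnt1_out[OF assms] cnt2_out[OF assms] by simp
  have "card (thru x - (?S1 \<union> ?S2)) = card (thru x) - card (?S1 \<union> ?S2)"
    using sub by (simp add: card_Diff_subset)
  moreover have "card (?S1 \<union> ?S2) \<le> card (thru x)" using sub by (simp add: card_mono)
  ultimately show ?thesis using eq cu by (simp add: of_nat_diff)
qed



definition Nv :: "(('k::{field,finite})^'n \<Rightarrow> real) \<Rightarrow> ('k^'n) set \<Rightarrow> real" where
  "Nv c = (\<lambda>l. \<Sum>p\<in>UNIV. c p * pencil_vec p l)"

lemma Nv_eq: "Nv c l = (if l \<in> affine_lines then (\<Sum>x\<in>l. c x) else 0)"
  unfolding Nv_def pencil_vec_def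
  by (auto simp: if_distrib sum.If_cases Int_def)

definition rr :: "'k::{field,finite} itself \<Rightarrow> 'n::finite itself \<Rightarrow> real" where
  "rr _ _ = (real CARD('k) ^ CARD('n) - 1) / (real CARD('k) - 1)"

lemma q_ge2: "real CARD('k::{field,finite}) \<ge> 2"
proof -
  have "card {0::'k, 1} \<le> CARD('k)" by (rule card_mono) auto
  then show ?thesis by simp
qed

lemma card_thru: "real (card (thru (x::('k::{field,finite})^'n))) = rr TYPE('k) TYPE('n)"
  using lines_through_count[of x] q_ge2[where 'k='k] unfolding rr_def
  by (simp add: field_simps)

lemma adj_gen: fixes l :: "(('k::{field,finite})^'n) set"
  assumes "l \<in> affine_lines"
  shows "adj_op R (Nv c) l = (\<Sum>x\<in>UNIV. c x * real (card {l' \<in> affine_lines. x \<in> l' \<and> R l l'}))"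
proof -
  have "adj_op R (Nv c) l = (\<Sum>l'\<in>{l' \<in> affine_lines. R l l'}. \<Sum>x\<in>l'. c x)"
    unfolding adj_op_def using assms by (simp add: Nv_eq)
  also have "\<dots> = (\<Sum>x\<in>UNIV. c x * real (card {l' \<in> affine_lines. x \<in> l' \<and> R l l'}))"
    unfolding swap_count nested_eq ..
  finally show ?thesis .
qed

lemma adj1: fixes l :: "(('k::{field,finite})^'n) set"
  assumes "l \<in> affine_lines"
  shows "adj_op rel1 (Nv c) l = (rr TYPE('k) TYPE('n) - 1) * (\<Sum>x\<in>l. c x)
          + real CARD('k) * ((\<Sum>x\<in>UNIV. c x) - (\<Sum>x\<in>l. c x))"
proof -
  have "adj_op rel1 (Nv c) l = (\<Sum>x\<in>UNIV. c x * (if x \<in> l then rr TYPE('k) TYPE('n) - 1 else real CARD('k)))"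
    unfolding adj_gen[OF assms]
  proof (rule sum.cong[OF refl])
    fix x :: "'k^'n"
    show "c x * real (card {l' \<in> affine_lines. x \<in> l' \<and> rel1 l l'}) =
          c x * (if x \<in> l then rr TYPE('k) TYPE('n) - 1 else real CARD('k))"
    proof (cases "x \<in> l")
      case True
      then have "l \<in> thru x" using assms by simp
      then have "card (thru x) \<ge> 1"
        by (metis (no_types, lifting) One_nat_def Suc_leI card_gt_0_iff empty_iff finite_any)
      moreover have "card (thru x - {l}) = card (thru x) - 1"
        using \<open>l \<in> thru x\<close> by (simp add: card_Diff_singleton)
      ultimately have "real (card (thru x - {l})) = real (card (thru x)) - 1"
        by (simp add: of_nat_diff)
      then show ?thesis using True cnt1_in[OF assms True] card_thru[of x] by simp
    next
      case False then show ?thesis using cnt1_out[OF assms False] by simp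
    qed
  qed
  then show ?thesis by (simp add: sum_split_line)
qed

lemma adj2: fixes l :: "(('k::{field,finite})^'n) set"
  assumes "l \<in> affine_lines"
  shows "adj_op rel2 (Nv c) l = (\<Sum>x\<in>UNIV. c x) - (\<Sum>x\<in>l. c x)"
proof -
  have "adj_op rel2 (Nv c) l = (\<Sum>x\<in>UNIV. c x * (if x \<in> l then 0 else 1))"
    unfolding adj_gen[OF assms]
    by (rule sum.cong[OF refl]) (simp add: cnt2_in[OF assms] cnt2_out[OF assms])
  then show ?thesis by (simp add: sum_split_line)
qed

lemma adj3: fixes l :: "(('k::{field,finite})^'n) set"
  assumes "l \<in> affine_lines"
  shows "adj_op rel3 (Nv c) l = (rr TYPE('k) TYPE('n) - real CARD('k) - 1) * ((\<Sum>x\<in>UNIV. c x) - (\<Sum>x\<in>l. c x))"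
proof -
  have "adj_op rel3 (Nv c) l = (\<Sum>x\<in>UNIV. c x * (if x \<in> l then 0 else rr TYPE('k) TYPE('n) - real CARD('k) - 1))"
    unfolding adj_gen[OF assms]
    by (rule sum.cong[OF refl]) (simp add: cnt3_in cnt3_out[OF assms] card_thru)
  then show ?thesis by (simp add: sum_split_line)
qed


definition Ntr :: "((('k::{field,finite})^'n) set \<Rightarrow> real) \<Rightarrow> 'k^'n \<Rightarrow> real" where
  "Ntr f p = (\<Sum>l\<in>thru p. f l)"

lemma card_int: fixes l :: "(('k::{field,finite})^'n) set"
  assumes "l \<in> affine_lines" "l' \<in> affine_lines"
  shows "real (card (l \<inter> l')) = (if l' = l then real CARD('k) else 0) + (if rel1 l l' then 1 else 0)"
proof (cases "l' = l")
  case True then show ?thesis using card_aline[OF assms(1)] by (simp add: rel1_def)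
next
  case False
  show ?thesis
  proof (cases "l \<inter> l' = {}")
    case True then show ?thesis using False by (simp add: rel1_def)
  next
    case ne: False
    then obtain y where y: "y \<in> l" "y \<in> l'" by blast
    have "l \<inter> l' = {y}"
    proof (rule ccontr)
      assume "l \<inter> l' \<noteq> {y}"
      then obtain z where z: "z \<in> l" "z \<in> l'" "z \<noteq> y" using y by blast
      have "l = line y (z - y)" using unique_line[of l y z] assms y z by simp
      moreover have "l' = line y (z - y)" using unique_line[of l' y z] assms y z by simp
      ultimately show False using False by simp
    qed
    then show ?thesis using False ne by (simp add: rel1_def)
  qed
qed

lemma NNt: fixes l :: "(('k::{field,finite})^'n) set"
  assumes "l \<in> affine_lines"
  shows "Nv (Ntr f) l = real CARD('k) * f l + adj_op rel1 f l"
proof -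
  have "Nv (Ntr f) l = (\<Sum>x\<in>l. \<Sum>l'\<in>affine_lines. if x \<in> l' then f l' else 0)"
    using assms unfolding Nv_eq Ntr_def by (simp add: sum.inter_filter)
  also have "\<dots> = (\<Sum>l'\<in>affine_lines. \<Sum>x\<in>l. if x \<in> l' then f l' else 0)" by (rule sum.swap)
  also have "\<dots> = (\<Sum>l'\<in>affine_lines. f l' * real (card (l \<inter> l')))"
  proof (rule sum.cong[OF refl])
    fix l' show "(\<Sum>x\<in>l. if x \<in> l' then f l' else 0) = f l' * real (card (l \<inter> l'))"
      by (simp add: sum.inter_filter[symmetric] Int_def)
  qed
  also have "\<dots> = (\<Sum>l'\<in>affine_lines. (if l' = l then real CARD('k) * f l' else 0) + (if rel1 l l' then f l' else 0))"
    by (rule sum.cong[OF refl]) (simp add: card_int[OF assms] algebra_simps)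
  also have "\<dots> = real CARD('k) * f l + adj_op rel1 f l"
    using assms by (simp add: sum.distrib adj_op_def sum.inter_filter)
  finally show ?thesis .
qed



lemma ar_all:
  fixes Q m z :: real and n :: nat
  assumes Q: "Q \<ge> 2" and n: "n \<ge> 3"
  defines "R \<equiv> (Q^n - 1)/(Q - 1)"
  shows "(R - 1) * (m*Q) + Q*(m*Q^n - m*Q) = (Q^(n+1) - Q^2)/(Q-1) * (m*Q)"
    and "m*Q^n - m*Q = (Q^(n-1) - 1) * (m*Q)"
    and "(R - Q - 1)*(m*Q^n - m*Q) = ((Q^2 - (Q+1)*Q^n + Q^(2*n-1))/(Q-1)) * (m*Q)"
    and "(R - 1)*z + Q*(0 - z) = (Q^n - Q^2)/(Q-1) * z"
    and "(R - Q - 1)*(0 - z) = (Q^2 - Q^n)/(Q-1) * z"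
    and "Q + (Q^(n+1)-Q^2)/(Q-1) \<noteq> 0"
    and "Q + (Q^n-Q^2)/(Q-1) \<noteq> 0"
    and "R - 1 > 0"
    and "R - 1 + Q^n > 0"
proof -
  obtain k where k: "n = Suc k" using n by (cases n) auto
  define x where "x = Q^k"
  have Q1: "Q - 1 \<noteq> 0" "Q - 1 > 0" using Q by auto
  have "k > 0" using k n by simp
  then have xge: "x \<ge> Q" unfolding x_def using Q by (simp add: self_le_power)
  have e1: "Q^n = Q*x" "Q^(n+1) = Q*Q*x" "Q^(n-1) = x" "Q^(2*n-1) = Q*x*x"
  proof -
    show "Q^n = Q*x" "Q^(n+1) = Q*Q*x" "Q^(n-1) = x" using k unfolding x_def by simp_all
    have "2*n-1 = Suc (k+k)" using k by simp
    then show "Q^(2*n-1) = Q*x*x" unfolding x_def by (simp add: power_add)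
  qed
  have R: "R = (Q*x - 1)/(Q-1)" unfolding R_def e1 ..
  show "(R - 1) * (m*Q) + Q*(m*Q^n - m*Q) = (Q^(n+1) - Q^2)/(Q-1) * (m*Q)"
    unfolding R e1 using Q1 by (simp add: field_simps power2_eq_square; simp add: algebra_simps)
  show "m*Q^n - m*Q = (Q^(n-1) - 1) * (m*Q)" unfolding e1 by (simp add: algebra_simps)
  show "(R - Q - 1)*(m*Q^n - m*Q) = ((Q^2 - (Q+1)*Q^n + Q^(2*n-1))/(Q-1)) * (m*Q)"
    unfolding R e1 using Q1 by (simp add: field_simps power2_eq_square; simp add: algebra_simps)
  show "(R - 1)*z + Q*(0 - z) = (Q^n - Q^2)/(Q-1) * z"
    unfolding R e1 using Q1 by (simp add: field_simps power2_eq_square; simp add: algebra_simps)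
  show "(R - Q - 1)*(0 - z) = (Q^2 - Q^n)/(Q-1) * z"
    unfolding R e1 using Q1 by (simp add: field_simps power2_eq_square; simp add: algebra_simps)
  have qx: "Q*x \<ge> Q*Q" using xge Q by (intro mult_left_mono) auto
  have "Q*Q*x \<ge> Q*Q*1" using xge Q by (intro mult_left_mono) auto
  then have p1: "(Q*x - Q*Q)/(Q-1) \<ge> 0" "(Q*Q*x - Q*Q)/(Q-1) \<ge> 0" using Q1 qx
    by (auto intro!: divide_nonneg_pos)
  show "Q + (Q^(n+1)-Q^2)/(Q-1) \<noteq> 0" unfolding e1 power2_eq_square using p1 Q by linarith
  show "Q + (Q^n-Q^2)/(Q-1) \<noteq> 0" unfolding e1 power2_eq_square using p1 Q by linarith
  have "R - 1 = (Q*x - Q)/(Q-1)" unfolding R using Q1 by (simp add: field_simps)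
  moreover have "Q*Q \<ge> 2*Q" using Q by (intro mult_right_mono) auto
  then have "Q*x - Q > 0" using qx Q by linarith
  ultimately show "R - 1 > 0" using Q1 by simp
  moreover have "Q*x > 0" using xge Q by (intro mult_pos_pos) auto
  ultimately show "R - 1 + Q^n > 0" unfolding e1 by linarith
qed



lemma Nv_lin: "Nv (\<lambda>p. a * u p + b * w p) l = a * Nv u l + b * Nv w l"
  unfolding Nv_def by (simp add: sum.distrib sum_distrib_left algebra_simps)

lemma sum_const_line: fixes l :: "(('k::{field,finite})^'n) set"
  shows "l \<in> affine_lines \<Longrightarrow> (\<Sum>x\<in>l. m) = m * real CARD('k)"
  using card_aline[of l] by simp

theorem theorem5p13:
  assumes "CARD('n::finite) \<ge> 3"
  shows "(\<forall>c :: ('k::{field,finite})^'n \<Rightarrow> real.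
            (\<lambda>l. \<Sum>p\<in>UNIV. c p * pencil_vec p l) = (\<lambda>l. 0) \<longrightarrow> (\<forall>p. c p = 0))
       \<and> {(\<lambda>l. \<Sum>p\<in>UNIV. c p * pencil_vec p l) | c :: ('k::{field,finite})^'n \<Rightarrow> real. True}
         = {(\<lambda>l. f l + g l) | f g. f \<in> (V0 :: (('k^'n) set \<Rightarrow> real) set) \<and> g \<in> V1}"
proof -
  let ?Q = "real CARD('k)"
  let ?n = "CARD('n)"
  let ?R = "rr TYPE('k) TYPE('n)"
  have Q2: "?Q \<ge> 2" by (rule q_ge2)
  have Rdef: "?R = (?Q^?n - 1)/(?Q - 1)" unfolding rr_def ..
  note ar = ar_all[OF Q2 assms, folded Rdef]
  have cardU: "(\<Sum>x\<in>(UNIV::('k^'n) set). m) = m * ?Q ^ ?n" for m :: real by simp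
  have part1: "\<forall>c :: 'k^'n \<Rightarrow> real. Nv c = (\<lambda>l. 0) \<longrightarrow> (\<forall>p. c p = 0)"
  proof (intro allI impI)
    fix c :: "'k^'n \<Rightarrow> real" and p0 :: "'k^'n" assume N0: "Nv c = (\<lambda>l. 0)"
    let ?S = "\<Sum>x\<in>UNIV. c x"
    have eq: "(?R - 1) * c p + ?S = 0" for p
    proof -
      have "(\<Sum>l\<in>thru p. \<Sum>x\<in>l. c x) = (\<Sum>l\<in>thru p. Nv c l)"
        by (rule sum.cong[OF refl]) (simp add: Nv_eq)
      also have "\<dots> = 0" using N0 by simp
      finally show ?thesis using pencil_sum[where p=p and c=c] card_thru[of p] by simp
    qed
    have "(\<Sum>p\<in>UNIV. (?R - 1) * c p + ?S) = 0" using eq by simp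
    moreover have "(\<Sum>p\<in>UNIV. (?R - 1) * c p + ?S) = (?R - 1) * ?S + ?S * ?Q ^ ?n"
      by (simp add: sum.distrib sum_distrib_left[symmetric])
    ultimately have "(?R - 1) * ?S + ?S * ?Q ^ ?n = 0" by simp
    then have "?S * (?R - 1 + ?Q ^ ?n) = 0" by (simp add: algebra_simps)
    then have S0: "?S = 0" using ar(9) by simp
    show "c p0 = 0" using eq[of p0] S0 ar(8) by simp
  qed
  have sub1: "Nv c \<in> {(\<lambda>l. f l + g l) | f g. f \<in> (V0 :: (('k^'n) set \<Rightarrow> real) set) \<and> g \<in> V1}"
    for c :: "'k^'n \<Rightarrow> real"
  proof -
    define S where "S = (\<Sum>x\<in>UNIV. c x)"
    define m where "m = S / ?Q ^ ?n"
    define c0 where "c0 x = c x - m" for x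
    have Sc0: "(\<Sum>x\<in>UNIV. c0 x) = 0" unfolding c0_def m_def S_def
      using Q2 by (simp add: sum_subtractf)
    have split: "Nv c = (\<lambda>l. Nv (\<lambda>_. m) l + Nv c0 l)"
      unfolding Nv_def c0_def by (auto simp: sum.distrib[symmetric] algebra_simps intro!: ext sum.cong)
    have f0: "Nv (\<lambda>_. m) \<in> (V0 :: (('k^'n) set \<Rightarrow> real) set)"
      unfolding V0_def Let_def common_eigenspace_def line_space_def
    proof (intro CollectI conjI allI impI ext)
      fix l :: "('k^'n) set"
      show "l \<notin> affine_lines \<Longrightarrow> Nv (\<lambda>_. m) l = 0" by (simp add: Nv_eq)
      show "adj_op rel1 (Nv (\<lambda>_. m)) l = (?Q ^ (?n + 1) - ?Q\<^sup>2) / (?Q - 1) * Nv (\<lambda>_. m) l"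
      proof (cases "l \<in> affine_lines")
        case True
        have "adj_op rel1 (Nv (\<lambda>_. m)) l = (?R - 1) * (m*?Q) + ?Q*(m*?Q^?n - m*?Q)"
          using True by (simp add: adj1 card_aline[OF True] cardU algebra_simps)
        then show ?thesis using True ar(1)[of m] by (simp add: Nv_eq card_aline[OF True] algebra_simps)
      qed (simp add: adj_op_def Nv_eq)
      show "adj_op rel2 (Nv (\<lambda>_. m)) l = (?Q ^ (?n - 1) - 1) * Nv (\<lambda>_. m) l"
      proof (cases "l \<in> affine_lines")
        case True
        have "adj_op rel2 (Nv (\<lambda>_. m)) l = m*?Q^?n - m*?Q"
          using True by (simp add: adj2 card_aline[OF True] cardU algebra_simps)
        then show ?thesis using True ar(2)[of m] by (simp add: Nv_eq card_aline[OF True] algebra_simps)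
      qed (simp add: adj_op_def Nv_eq)
      show "adj_op rel3 (Nv (\<lambda>_. m)) l = (?Q\<^sup>2 - (?Q + 1) * ?Q ^ ?n + ?Q ^ (2 * ?n - 1)) / (?Q - 1) * Nv (\<lambda>_. m) l"
      proof (cases "l \<in> affine_lines")
        case True
        have "adj_op rel3 (Nv (\<lambda>_. m)) l = (?R - ?Q - 1)*(m*?Q^?n - m*?Q)"
          using True by (simp add: adj3 card_aline[OF True] cardU algebra_simps)
        then show ?thesis using True ar(3)[of m] by (simp add: Nv_eq card_aline[OF True] algebra_simps)
      qed (simp add: adj_op_def Nv_eq)
    qed
    have g1: "Nv c0 \<in> (V1 :: (('k^'n) set \<Rightarrow> real) set)"
      unfolding V1_def Let_def common_eigenspace_def line_space_def
    proof (intro CollectI conjI allI impI ext)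
      fix l :: "('k^'n) set"
      show "l \<notin> affine_lines \<Longrightarrow> Nv c0 l = 0" by (simp add: Nv_eq)
      show "adj_op rel1 (Nv c0) l = (?Q ^ ?n - ?Q\<^sup>2) / (?Q - 1) * Nv c0 l"
      proof (cases "l \<in> affine_lines")
        case True
        have "adj_op rel1 (Nv c0) l = (?R - 1) * (\<Sum>x\<in>l. c0 x) + ?Q*(0 - (\<Sum>x\<in>l. c0 x))"
          using True by (simp add: adj1 Sc0)
        then show ?thesis using True ar(4)[of "\<Sum>x\<in>l. c0 x"] by (simp add: Nv_eq)
      qed (simp add: adj_op_def Nv_eq)
      show "adj_op rel2 (Nv c0) l = - 1 * Nv c0 l"
      proof (cases "l \<in> affine_lines")
        case True
        then show ?thesis by (simp add: adj2 Sc0 Nv_eq)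
      qed (simp add: adj_op_def Nv_eq)
      show "adj_op rel3 (Nv c0) l = (?Q\<^sup>2 - ?Q ^ ?n) / (?Q - 1) * Nv c0 l"
      proof (cases "l \<in> affine_lines")
        case True
        have "adj_op rel3 (Nv c0) l = (?R - ?Q - 1) * (0 - (\<Sum>x\<in>l. c0 x))"
          using True by (simp add: adj3 Sc0)
        then show ?thesis using True ar(5)[of "\<Sum>x\<in>l. c0 x"] by (simp add: Nv_eq)
      qed (simp add: adj_op_def Nv_eq)
    qed
    show ?thesis using split f0 g1 by blast
  qed
  have sub2: "(\<lambda>l. f l + g l) \<in> {Nv c | c :: 'k^'n \<Rightarrow> real. True}"
    if f: "f \<in> (V0 :: (('k^'n) set \<Rightarrow> real) set)" and g: "g \<in> V1" for f g
  proof -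
    define a0 where "a0 = (?Q ^ (?n + 1) - ?Q\<^sup>2) / (?Q - 1)"
    define a1 where "a1 = (?Q ^ ?n - ?Q\<^sup>2) / (?Q - 1)"
    have fe: "adj_op rel1 f = (\<lambda>l. a0 * f l)" "\<And>l. l \<notin> affine_lines \<Longrightarrow> f l = 0"
      using f unfolding V0_def Let_def common_eigenspace_def line_space_def a0_def by auto
    have ge: "adj_op rel1 g = (\<lambda>l. a1 * g l)" "\<And>l. l \<notin> affine_lines \<Longrightarrow> g l = 0"
      using g unfolding V1_def Let_def common_eigenspace_def line_space_def a1_def by auto
    have d0: "?Q + a0 \<noteq> 0" unfolding a0_def by (rule ar(6))
    have d1: "?Q + a1 \<noteq> 0" unfolding a1_def by (rule ar(7))
    define c where "c p = (1/(?Q + a0)) * Ntr f p + (1/(?Q + a1)) * Ntr g p" for p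
    have "(\<lambda>l. f l + g l) = Nv c"
    proof
      fix l :: "('k^'n) set"
      show "f l + g l = Nv c l"
      proof (cases "l \<in> affine_lines")
        case True
        have "Nv c l = (1/(?Q + a0)) * Nv (Ntr f) l + (1/(?Q + a1)) * Nv (Ntr g) l"
          unfolding c_def[abs_def] by (rule Nv_lin)
        also have "\<dots> = (1/(?Q + a0)) * ((?Q + a0) * f l) + (1/(?Q + a1)) * ((?Q + a1) * g l)"
          using True fe(1) ge(1) by (simp add: NNt algebra_simps)
        also have "\<dots> = f l + g l" using d0 d1 by simp
        finally show ?thesis by simp
      next
        case False then show ?thesis using fe(2) ge(2) by (simp add: Nv_eq)
      qed
    qed
    then show ?thesis by blast
  qed
  have "{Nv c | c :: 'k^'n \<Rightarrow> real. True}
         = {(\<lambda>l. f l + g l) | f g. f \<in> (V0 :: (('k^'n) set \<Rightarrow> real) set) \<and> g \<in> V1}"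
    using sub1 sub2 by blast
  with part1 show ?thesis unfolding Nv_def by simp
qed


end
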